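(* Let $\Psi$ be a root subsystem of $\Phi$. (i) If $\Psi$ is saturated in $\Phi$, then for every $D\in\mathrm{Ch}_\Psi$ there exists at least one $C\in\mathrm{Ch}_\Phi$ lifting $D$. (ii) If some chamber $C\in\mathrm{Ch}_\Phi$ lifts some chamber $D\in\mathrm{Ch}_\Psi$, then $\Psi$ is saturated in $\Phi$.
   Context: $E$ is a finite-dimensional real Euclidean space with inner product $(\cdot,\cdot)$; $\Phi\subset E$ is a finite (reduced) root system (not necessarily spanning $E$, not necessarily crystallographic), with reflections $\omega_\alpha$ through $L_\alpha=\alpha^\perp$. A root subsystem is a nonempty $\Psi\subset\Phi$ stable under $\omega_\alpha$, $\alpha\in\Psi$. $\Psi$ is saturated in $\Phi$ if $\Psi=\mathbb R\Psi\cap\Phi$, where $\mathbb R\Psi$ is the real linear span. For $X\subset\Phi$, $\mathrm{Ch}_X$ is the set of connected components of $E\setminus\bigcup_{\alpha\in X}L_\alpha$. For $C\in\mathrm{Ch}_\Phi$, $\Phi^+(C)=\{\alpha\in\Phi:(e,\alpha)>0\ \forall e\in C\}$ and $\Phi^s(C)$ is the unique simple system of $\Phi$ contained in $\Phi^+(C)$ (a simple system is a linearly independent subset $S$ such that each root is a linear combination of elements of $S$ with all coefficients $\ge0$ or all $\le0$). Similarly $\Psi^+(D)$, $\Psi^s(D)$ for $D\in\mathrm{Ch}_\Psi$. A chamber $C\in\mathrm{Ch}_\Phi$ lifts $D\in\mathrm{Ch}_\Psi$ if $\Psi^s(D)\subset\Phi^s(C)$. *)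

theory Defs
  imports "HOL-Analysis.Analysis"
begin

definition refl :: "'a::euclidean_space \<Rightarrow> 'a \<Rightarrow> 'a" where
  "refl \<alpha> x = x - (2 * (x \<bullet> \<alpha>) / (\<alpha> \<bullet> \<alpha>)) *\<^sub>R \<alpha>"

text \<open>Finite reduced root system (not necessarily spanning, not necessarily crystallographic).\<close>
definition root_system :: "'a::euclidean_space set \<Rightarrow> bool" where
  "root_system \<Phi> \<longleftrightarrow> finite \<Phi> \<and> 0 \<notin> \<Phi>
     \<and> (\<forall>\<alpha>\<in>\<Phi>. \<forall>\<beta>\<in>\<Phi>. refl \<alpha> \<beta> \<in> \<Phi>)
     \<and> (\<forall>\<alpha>\<in>\<Phi>. \<forall>c::real. c *\<^sub>R \<alpha> \<in> \<Phi> \<longrightarrow> c = 1 \<or> c = -1)"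

definition root_subsystem :: "'a::euclidean_space set \<Rightarrow> 'a set \<Rightarrow> bool" where
  "root_subsystem \<Phi> \<Psi> \<longleftrightarrow> \<Psi> \<noteq> {} \<and> \<Psi> \<subseteq> \<Phi> \<and> (\<forall>\<alpha>\<in>\<Psi>. \<forall>\<beta>\<in>\<Psi>. refl \<alpha> \<beta> \<in> \<Psi>)"

definition saturated :: "'a::euclidean_space set \<Rightarrow> 'a set \<Rightarrow> bool" where
  "saturated \<Phi> \<Psi> \<longleftrightarrow> \<Psi> = span \<Psi> \<inter> \<Phi>"

definition Ch :: "'a::euclidean_space set \<Rightarrow> 'a set set" where
  "Ch X = components (UNIV - (\<Union>\<alpha>\<in>X. {x. x \<bullet> \<alpha> = 0}))"

definition pos_roots :: "'a::euclidean_space set \<Rightarrow> 'a set \<Rightarrow> 'a set" where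
  "pos_roots \<Phi> C = {\<alpha>\<in>\<Phi>. \<forall>e\<in>C. e \<bullet> \<alpha> > 0}"

definition simple_system :: "'a::euclidean_space set \<Rightarrow> 'a set \<Rightarrow> bool" where
  "simple_system \<Phi> S \<longleftrightarrow> S \<subseteq> \<Phi> \<and> independent S \<and>
     (\<forall>\<beta>\<in>\<Phi>. \<exists>c::'a \<Rightarrow> real. \<beta> = (\<Sum>\<alpha>\<in>S. c \<alpha> *\<^sub>R \<alpha>) \<and>
        ((\<forall>\<alpha>\<in>S. c \<alpha> \<ge> 0) \<or> (\<forall>\<alpha>\<in>S. c \<alpha> \<le> 0)))"

text \<open>The unique simple system contained in the positive roots of a chamber.\<close>
definition simple_roots :: "'a::euclidean_space set \<Rightarrow> 'a set \<Rightarrow> 'a set" where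
  "simple_roots \<Phi> C = (THE S. simple_system \<Phi> S \<and> S \<subseteq> pos_roots \<Phi> C)"

definition lifts :: "'a::euclidean_space set \<Rightarrow> 'a set \<Rightarrow> 'a set \<Rightarrow> 'a set \<Rightarrow> bool" where
  "lifts \<Phi> \<Psi> C D \<longleftrightarrow> simple_roots \<Psi> D \<subseteq> simple_roots \<Phi> C"

end

theory Submission
  imports Defs
begin

definition nncomb :: "'a::euclidean_space set \<Rightarrow> 'a \<Rightarrow> bool" where
  "nncomb T v \<longleftrightarrow> (\<exists>c. (\<forall>\<gamma>\<in>T. c \<gamma> \<ge> 0) \<and> v = (\<Sum>\<gamma>\<in>T. c \<gamma> *\<^sub>R \<gamma>))"

lemma refl_alt: "refl \<alpha> x = x - (2 * (x \<bullet> \<alpha>) / (\<alpha> \<bullet> \<alpha>)) *\<^sub>R \<alpha>"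
  by (simp add: refl_def)

lemma refl_self: "\<alpha> \<noteq> 0 \<Longrightarrow> refl \<alpha> \<alpha> = - \<alpha>"
  by (simp add: refl_def algebra_simps scaleR_2)

lemma refl_inner: "\<alpha> \<noteq> 0 \<Longrightarrow> refl \<alpha> x \<bullet> \<alpha> = - (x \<bullet> \<alpha>)"
  by (simp add: refl_def inner_diff_left algebra_simps)

lemma refl_refl: "\<alpha> \<noteq> 0 \<Longrightarrow> refl \<alpha> (refl \<alpha> x) = x"
proof -
  assume a: "\<alpha> \<noteq> 0"
  have "refl \<alpha> (refl \<alpha> x) = refl \<alpha> x - (2 * (refl \<alpha> x \<bullet> \<alpha>) / (\<alpha> \<bullet> \<alpha>)) *\<^sub>R \<alpha>"
    by (simp add: refl_def)
  also have "\<dots> = refl \<alpha> x + (2 * (x \<bullet> \<alpha>) / (\<alpha> \<bullet> \<alpha>)) *\<^sub>R \<alpha>"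
    using refl_inner[OF a] by simp
  also have "\<dots> = x" by (simp add: refl_def)
  finally show ?thesis .
qed

lemma rs_neg: "root_system \<Phi> \<Longrightarrow> \<alpha> \<in> \<Phi> \<Longrightarrow> - \<alpha> \<in> \<Phi>"
  unfolding root_system_def by (metis refl_self)

lemma rs_reduced: "root_system \<Phi> \<Longrightarrow> \<alpha> \<in> \<Phi> \<Longrightarrow> r *\<^sub>R \<alpha> \<in> \<Phi> \<Longrightarrow> r > 0 \<Longrightarrow> r = 1"
  unfolding root_system_def by force

lemma rs_sub: "root_system \<Phi> \<Longrightarrow> root_subsystem \<Phi> \<Psi> \<Longrightarrow> root_system \<Psi>"
  unfolding root_system_def root_subsystem_def by (meson finite_subset subsetD)

lemma chamber_sign:
  assumes "C \<in> Ch X" "x \<in> C" "y \<in> C" "\<alpha> \<in> X" "x \<bullet> \<alpha> > 0"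
  shows "y \<bullet> \<alpha> > 0"
proof (rule ccontr)
  let ?U = "UNIV - (\<Union>\<alpha>\<in>X. {x. x \<bullet> \<alpha> = 0})"
  assume "\<not> y \<bullet> \<alpha> > 0"
  have C: "C \<in> components ?U" using assms(1) by (simp add: Ch_def)
  have conn: "connected C" using in_components_connected[OF C] .
  have sub: "C \<subseteq> ?U" using in_components_subset[OF C] .
  have "inner \<alpha> y \<le> 0" "0 \<le> inner \<alpha> x" using \<open>\<not> y \<bullet> \<alpha> > 0\<close> assms(5)
    by (auto simp: inner_commute)
  then obtain z where "z \<in> C" "inner \<alpha> z = 0"
    using connected_ivt_hyperplane[OF conn assms(3) assms(2)] by blast
  then show False using sub assms(4) by (auto simp: inner_commute)
qed

lemma chamber_nonzero: "C \<in> Ch X \<Longrightarrow> x \<in> C \<Longrightarrow> \<alpha> \<in> X \<Longrightarrow> x \<bullet> \<alpha> \<noteq> 0"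
  unfolding Ch_def using in_components_subset by blast

lemma chamber_ne: "C \<in> Ch X \<Longrightarrow> C \<noteq> {}"
  unfolding Ch_def using in_components_nonempty by blast

lemma pos_roots_eq: "C \<in> Ch X \<Longrightarrow> e \<in> C \<Longrightarrow> pos_roots X C = {\<beta>\<in>X. e \<bullet> \<beta> > 0}"
  unfolding pos_roots_def using chamber_sign by blast

lemma indep_unique:
  assumes "independent S" "(\<Sum>\<gamma>\<in>S. a \<gamma> *\<^sub>R \<gamma>) = (\<Sum>\<gamma>\<in>S. b \<gamma> *\<^sub>R (\<gamma>::'a::euclidean_space))" "\<gamma> \<in> S"
  shows "a \<gamma> = b \<gamma>"
proof -
  have 1: "(\<Sum>\<gamma>\<in>S. (a \<gamma> - b \<gamma>) *\<^sub>R \<gamma>) = 0"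
    using assms(2) by (simp add: scaleR_diff_left sum_subtractf)
  have fin: "finite S" using assms(1) independent_imp_finite by auto
  have "\<not> (\<exists>u. (\<exists>v\<in>S. u v \<noteq> 0) \<and> (\<Sum>v\<in>S. u v *\<^sub>R v) = 0)"
    using assms(1) dependent_finite[OF fin] by simp
  then show ?thesis using 1 assms(3) exI[of "\<lambda>u. (\<exists>v\<in>S. u v \<noteq> 0) \<and> (\<Sum>v\<in>S. u v *\<^sub>R v) = 0" "\<lambda>v. a v - b v"]
    by auto
qed

lemma sum_ext:
  assumes "J \<subseteq> S" "finite S"
  shows "(\<Sum>\<gamma>\<in>S. (if \<gamma> \<in> J then c \<gamma> else 0) *\<^sub>R \<gamma>) = (\<Sum>\<gamma>\<in>J. c \<gamma> *\<^sub>R (\<gamma>::'a::real_vector))"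
proof -
  have "(\<Sum>\<gamma>\<in>S. (if \<gamma> \<in> J then c \<gamma> else 0) *\<^sub>R \<gamma>) = (\<Sum>\<gamma>\<in>J. (if \<gamma> \<in> J then c \<gamma> else 0) *\<^sub>R \<gamma>)"
    by (rule sum.mono_neutral_right) (use assms in auto)
  then show ?thesis by simp
qed

lemma nncomb_trans:
  assumes "finite T" "finite T'" "nncomb T v" "\<forall>\<gamma>\<in>T. nncomb T' \<gamma>"
  shows "nncomb T' v"
proof -
  obtain c where c: "\<forall>\<gamma>\<in>T. c \<gamma> \<ge> 0" "v = (\<Sum>\<gamma>\<in>T. c \<gamma> *\<^sub>R \<gamma>)"
    using assms(3) by (auto simp: nncomb_def)
  obtain d where d: "\<forall>\<gamma>\<in>T. (\<forall>\<delta>\<in>T'. d \<gamma> \<delta> \<ge> 0) \<and> \<gamma> = (\<Sum>\<delta>\<in>T'. d \<gamma> \<delta> *\<^sub>R \<delta>)"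
    using assms(4) unfolding nncomb_def by metis
  have "v = (\<Sum>\<gamma>\<in>T. c \<gamma> *\<^sub>R (\<Sum>\<delta>\<in>T'. d \<gamma> \<delta> *\<^sub>R \<delta>))"
    using c(2) d by (metis (no_types, lifting) sum.cong)
  also have "\<dots> = (\<Sum>\<delta>\<in>T'. (\<Sum>\<gamma>\<in>T. c \<gamma> * d \<gamma> \<delta>) *\<^sub>R \<delta>)"
    by (simp add: scaleR_sum_right scaleR_sum_left sum.swap[of _ T T'])
  finally show ?thesis unfolding nncomb_def
    using c(1) d by (intro exI[of _ "\<lambda>\<delta>. \<Sum>\<gamma>\<in>T. c \<gamma> * d \<gamma> \<delta>"]) (auto intro!: sum_nonneg)
qed

lemma nncomb_single: "finite T \<Longrightarrow> \<gamma> \<in> T \<Longrightarrow> k \<ge> 0 \<Longrightarrow> nncomb T (k *\<^sub>R \<gamma>)"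
  unfolding nncomb_def
  by (rule exI[of _ "\<lambda>\<delta>. if \<delta> = \<gamma> then k else 0"]) (simp add: if_distrib[of "\<lambda>c. c *\<^sub>R _"] sum.delta cong: if_cong)

lemma PL:
  assumes "independent S" "finite T" "x \<in> S" "x = (\<Sum>\<gamma>\<in>T. c \<gamma> *\<^sub>R \<gamma>)" "\<forall>\<gamma>\<in>T. c \<gamma> \<ge> 0"
    "\<forall>\<gamma>\<in>T. nncomb S \<gamma>"
  shows "\<exists>\<gamma>\<in>T. \<exists>r>0. \<gamma> = r *\<^sub>R x"
proof -
  have fS: "finite S" using assms(1) independent_imp_finite by blast
  obtain d where d: "\<forall>\<gamma>\<in>T. (\<forall>\<delta>\<in>S. d \<gamma> \<delta> \<ge> 0) \<and> \<gamma> = (\<Sum>\<delta>\<in>S. d \<gamma> \<delta> *\<^sub>R \<delta>)"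
    using assms(6) unfolding nncomb_def by metis
  have "x = (\<Sum>\<gamma>\<in>T. c \<gamma> *\<^sub>R (\<Sum>\<delta>\<in>S. d \<gamma> \<delta> *\<^sub>R \<delta>))"
    using assms(4) d by (metis (no_types, lifting) sum.cong)
  also have "\<dots> = (\<Sum>\<delta>\<in>S. (\<Sum>\<gamma>\<in>T. c \<gamma> * d \<gamma> \<delta>) *\<^sub>R \<delta>)"
    by (simp add: scaleR_sum_right scaleR_sum_left sum.swap[of _ T S])
  finally have e1: "(\<Sum>\<delta>\<in>S. (\<Sum>\<gamma>\<in>T. c \<gamma> * d \<gamma> \<delta>) *\<^sub>R \<delta>) = (\<Sum>\<delta>\<in>S. (if \<delta> = x then 1 else 0) *\<^sub>R \<delta>)"
    using assms(3) fS by (simp add: if_distrib[of "\<lambda>c. c *\<^sub>R _"] sum.delta cong: if_cong)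
  have co: "\<And>\<delta>. \<delta> \<in> S \<Longrightarrow> (\<Sum>\<gamma>\<in>T. c \<gamma> * d \<gamma> \<delta>) = (if \<delta> = x then 1 else 0)"
    using indep_unique[OF assms(1) e1] by blast
  have s1: "(\<Sum>\<gamma>\<in>T. c \<gamma> * d \<gamma> x) = 1" using co[OF assms(3)] by simp
  have "\<exists>\<gamma>\<in>T. c \<gamma> * d \<gamma> x \<noteq> 0"
  proof (rule ccontr)
    assume "\<not> (\<exists>\<gamma>\<in>T. c \<gamma> * d \<gamma> x \<noteq> 0)"
    then have "(\<Sum>\<gamma>\<in>T. c \<gamma> * d \<gamma> x) = 0" by (intro sum.neutral) auto
    then show False using s1 by simp
  qed
  then obtain \<gamma> where g: "\<gamma> \<in> T" "c \<gamma> * d \<gamma> x \<noteq> 0" by blast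
  have cpos: "c \<gamma> > 0" and dpos: "d \<gamma> x > 0"
    using g assms(3,5) d by (auto simp: order_le_less)
  have z: "d \<gamma> \<delta> = 0" if "\<delta> \<in> S" "\<delta> \<noteq> x" for \<delta>
  proof -
    have "(\<Sum>\<gamma>\<in>T. c \<gamma> * d \<gamma> \<delta>) = 0" using co[OF that(1)] that(2) by simp
    then have "c \<gamma> * d \<gamma> \<delta> = 0"
      using sum_nonneg_eq_0_iff[OF assms(2), of "\<lambda>\<gamma>. c \<gamma> * d \<gamma> \<delta>"] assms(5) d that g(1)
      by auto
    then show ?thesis using cpos by simp
  qed
  have "\<gamma> = (\<Sum>\<delta>\<in>S. d \<gamma> \<delta> *\<^sub>R \<delta>)" using d g(1) by blast
  also have "\<dots> = (\<Sum>\<delta>\<in>S. (if \<delta> = x then d \<gamma> x else 0) *\<^sub>R \<delta>)"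
    by (rule sum.cong) (auto simp: z)
  also have "\<dots> = d \<gamma> x *\<^sub>R x" using assms(3) fS
    by (simp add: if_distrib[of "\<lambda>c. c *\<^sub>R _"] sum.delta cong: if_cong)
  finally have "\<gamma> = d \<gamma> x *\<^sub>R x" .
  then show ?thesis using g(1) dpos by (intro bexI[of _ \<gamma>]) auto
qed

lemma simple_exists:
  fixes \<Phi> :: "'a::euclidean_space set" and e :: 'a
  assumes fin: "finite \<Phi>" and z: "0 \<notin> \<Phi>" and cl: "\<forall>\<alpha>\<in>\<Phi>. \<forall>\<beta>\<in>\<Phi>. refl \<alpha> \<beta> \<in> \<Phi>"
    and ne: "\<forall>\<beta>\<in>\<Phi>. e \<bullet> \<beta> \<noteq> 0"
  shows "\<exists>S. simple_system \<Phi> S \<and> S \<subseteq> {\<beta>\<in>\<Phi>. e \<bullet> \<beta> > 0}"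
proof -
  define P where "P = {\<beta>\<in>\<Phi>. e \<bullet> \<beta> > 0}"
  define gen where "gen T \<longleftrightarrow> T \<subseteq> P \<and> (\<forall>\<beta>\<in>P. nncomb T \<beta>)" for T
  have finP: "finite P" using fin by (simp add: P_def)
  have negP: "- \<beta> \<in> P" if "\<beta> \<in> \<Phi>" "e \<bullet> \<beta> < 0" for \<beta>
  proof -
    have "\<beta> \<noteq> 0" using z that by auto
    then have "- \<beta> \<in> \<Phi>" using cl that refl_self by metis
    then show ?thesis using that by (simp add: P_def)
  qed
  have "gen P" unfolding gen_def
    using nncomb_single[OF finP, of _ 1] by simp
  then have ex: "\<exists>n T. gen T \<and> card T = n" by blast
  define n where "n = (LEAST n. \<exists>T. gen T \<and> card T = n)"
  obtain S where S: "gen S" "card S = n"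
    using LeastI_ex[OF ex] unfolding n_def by blast
  have minS: "card S \<le> card T" if "gen T" for T
  proof -
    have "\<exists>Ta. gen Ta \<and> card Ta = card T" using that by blast
    from Least_le[of "\<lambda>n. \<exists>T. gen T \<and> card T = n", OF this] show ?thesis
      using S(2) unfolding n_def by simp
  qed
  have SP: "S \<subseteq> P" using S(1) by (simp add: gen_def)
  have finS: "finite S" using SP finP finite_subset by blast
  have Spos: "e \<bullet> \<gamma> > 0" if "\<gamma> \<in> S" for \<gamma> using SP that by (auto simp: P_def)
  have SPhi: "S \<subseteq> \<Phi>" using SP by (auto simp: P_def)
  have M: "\<not> nncomb (S - {x}) x" if "x \<in> S" for x
  proof
    assume h: "nncomb (S - {x}) x"
    have all: "\<forall>\<gamma>\<in>S. nncomb (S - {x}) \<gamma>"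
    proof
      fix \<gamma> assume "\<gamma> \<in> S"
      show "nncomb (S - {x}) \<gamma>"
      proof (cases "\<gamma> = x")
        case True then show ?thesis using h by simp
      next
        case False then show ?thesis
          using nncomb_single[of "S - {x}" \<gamma> 1] finS \<open>\<gamma> \<in> S\<close> by simp
      qed
    qed
    have "gen (S - {x})" unfolding gen_def
    proof
      show "S - {x} \<subseteq> P" using SP by blast
      show "\<forall>\<beta>\<in>P. nncomb (S - {x}) \<beta>"
        using S(1) all nncomb_trans[of S "S - {x}"] finS unfolding gen_def by blast
    qed
    then have "card S \<le> card (S - {x})" by (rule minS)
    moreover have "card (S - {x}) < card S" using finS that by (rule card_Diff1_less)
    ultimately show False by simp
  qed
  have R: False if x: "x \<in> S" and t: "t > 0" and eq: "t *\<^sub>R x = w + (\<Sum>\<gamma>\<in>S. c \<gamma> *\<^sub>R \<gamma>)"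
    and c: "\<forall>\<gamma>\<in>S. c \<gamma> \<ge> 0" and ew: "e \<bullet> w > 0" and w: "nncomb (S - {x}) w" for x t w c
  proof (cases "c x < t")
    case True
    obtain d where d: "\<forall>\<gamma>\<in>S - {x}. d \<gamma> \<ge> 0" "w = (\<Sum>\<gamma>\<in>S - {x}. d \<gamma> *\<^sub>R \<gamma>)"
      using w by (auto simp: nncomb_def)
    have "(\<Sum>\<gamma>\<in>S. c \<gamma> *\<^sub>R \<gamma>) = c x *\<^sub>R x + (\<Sum>\<gamma>\<in>S - {x}. c \<gamma> *\<^sub>R \<gamma>)"
      using finS x by (simp add: sum.remove)
    then have "(t - c x) *\<^sub>R x = w + (\<Sum>\<gamma>\<in>S - {x}. c \<gamma> *\<^sub>R \<gamma>)"
      using eq by (simp add: algebra_simps)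
    also have "\<dots> = (\<Sum>\<gamma>\<in>S - {x}. (d \<gamma> + c \<gamma>) *\<^sub>R \<gamma>)"
      using d(2) by (simp add: scaleR_add_left sum.distrib)
    finally have e2: "(t - c x) *\<^sub>R x = (\<Sum>\<gamma>\<in>S - {x}. (d \<gamma> + c \<gamma>) *\<^sub>R \<gamma>)" .
    have "x = (1 / (t - c x)) *\<^sub>R ((t - c x) *\<^sub>R x)" using True by simp
    also have "\<dots> = (\<Sum>\<gamma>\<in>S - {x}. ((d \<gamma> + c \<gamma>) / (t - c x)) *\<^sub>R \<gamma>)"
      unfolding e2 by (simp add: scaleR_sum_right)
    finally have "nncomb (S - {x}) x" unfolding nncomb_def
      using True d(1) c by (intro exI[of _ "\<lambda>\<gamma>. (d \<gamma> + c \<gamma>) / (t - c x)"]) auto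
    then show False using M x by blast
  next
    case False
    have ex: "e \<bullet> x > 0" using Spos x by blast
    have A: "t * (e \<bullet> x) = e \<bullet> w + (\<Sum>\<gamma>\<in>S. c \<gamma> * (e \<bullet> \<gamma>))"
    proof -
      have "t * (e \<bullet> x) = e \<bullet> (t *\<^sub>R x)" by simp
      also have "\<dots> = e \<bullet> w + (\<Sum>\<gamma>\<in>S. c \<gamma> * (e \<bullet> \<gamma>))"
        unfolding eq by (simp add: inner_add_right inner_sum_right)
      finally show ?thesis .
    qed
    have B: "(\<Sum>\<gamma>\<in>S. c \<gamma> * (e \<bullet> \<gamma>)) \<ge> c x * (e \<bullet> x)"
      using member_le_sum[of x S "\<lambda>\<gamma>. c \<gamma> * (e \<bullet> \<gamma>)"] finS x c Spos
      by (simp add: less_imp_le)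
    have C: "c x * (e \<bullet> x) \<ge> t * (e \<bullet> x)"
      using False ex by (simp add: mult_right_mono)
    from A B C ew show False by linarith
  qed
  have ang: "\<alpha> \<bullet> \<beta> \<le> 0" if ab: "\<alpha> \<in> S" "\<beta> \<in> S" "\<alpha> \<noteq> \<beta>" for \<alpha> \<beta>
  proof (rule ccontr)
    assume "\<not> \<alpha> \<bullet> \<beta> \<le> 0"
    then have pos: "\<beta> \<bullet> \<alpha> > 0" by (simp add: inner_commute)
    have a0: "\<alpha> \<noteq> 0" using ab SPhi z by auto
    define k where "k = 2 * (\<beta> \<bullet> \<alpha>) / (\<alpha> \<bullet> \<alpha>)"
    have kpos: "k > 0" using pos a0 by (simp add: k_def)
    define \<beta>' where "\<beta>' = refl \<alpha> \<beta>"
    have b': "\<beta>' = \<beta> - k *\<^sub>R \<alpha>" by (simp add: \<beta>'_def refl_def k_def)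
    have b'Phi: "\<beta>' \<in> \<Phi>" using cl ab SPhi by (auto simp: \<beta>'_def)
    have ea: "e \<bullet> \<alpha> > 0" using Spos ab by blast
    show False
    proof (cases "e \<bullet> \<beta>' > 0")
      case True
      then have "\<beta>' \<in> P" using b'Phi by (simp add: P_def)
      then obtain c where c: "\<forall>\<gamma>\<in>S. c \<gamma> \<ge> 0" "\<beta>' = (\<Sum>\<gamma>\<in>S. c \<gamma> *\<^sub>R \<gamma>)"
        using S(1) by (auto simp: gen_def nncomb_def)
      have "1 *\<^sub>R \<beta> = k *\<^sub>R \<alpha> + (\<Sum>\<gamma>\<in>S. c \<gamma> *\<^sub>R \<gamma>)" using b' c(2) by simp
      moreover have "nncomb (S - {\<beta>}) (k *\<^sub>R \<alpha>)"
        using nncomb_single[of "S - {\<beta>}" \<alpha> k] finS ab kpos by simp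
      moreover have "e \<bullet> (k *\<^sub>R \<alpha>) > 0" using kpos ea by simp
      ultimately show False using R[of \<beta> 1 "k *\<^sub>R \<alpha>" c] ab c(1) by simp
    next
      case False
      then have "e \<bullet> \<beta>' < 0" using ne b'Phi by (meson linorder_neqE_linordered_idom)
      then have "- \<beta>' \<in> P" using negP b'Phi by blast
      then obtain c where c: "\<forall>\<gamma>\<in>S. c \<gamma> \<ge> 0" "- \<beta>' = (\<Sum>\<gamma>\<in>S. c \<gamma> *\<^sub>R \<gamma>)"
        using S(1) by (auto simp: gen_def nncomb_def)
      have s: "(\<Sum>\<gamma>\<in>S. c \<gamma> *\<^sub>R \<gamma>) = k *\<^sub>R \<alpha> - \<beta>" unfolding c(2)[symmetric] b' by simp
      have "k *\<^sub>R \<alpha> = \<beta> + (\<Sum>\<gamma>\<in>S. c \<gamma> *\<^sub>R \<gamma>)" unfolding s by simp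
      moreover have "nncomb (S - {\<alpha>}) \<beta>"
        using nncomb_single[of "S - {\<alpha>}" \<beta> 1] finS ab by simp
      moreover have "e \<bullet> \<beta> > 0" using Spos ab by blast
      ultimately show False using R[of \<alpha> k \<beta> c] ab c(1) kpos by simp
    qed
  qed
  have indep: "independent S"
  proof -
    have "\<not> (\<exists>u. (\<exists>v\<in>S. u v \<noteq> 0) \<and> (\<Sum>v\<in>S. u v *\<^sub>R v) = 0)"
    proof
      assume "\<exists>u. (\<exists>v\<in>S. u v \<noteq> 0) \<and> (\<Sum>v\<in>S. u v *\<^sub>R v) = 0"
      then obtain u where u: "\<exists>v\<in>S. u v \<noteq> 0" "(\<Sum>v\<in>S. u v *\<^sub>R v) = 0" by blast
      define p where "p v = max (u v) 0" for v
      define q where "q v = max (- u v) 0" for v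
      have pq: "u v = p v - q v" for v by (simp add: p_def q_def max_def)
      have p0: "p v \<ge> 0" "q v \<ge> 0" for v by (simp_all add: p_def q_def)
      have pq0: "p v * q v = 0" for v by (simp add: p_def q_def max_def)
      define \<sigma> where "\<sigma> = (\<Sum>v\<in>S. p v *\<^sub>R v)"
      define \<tau> where "\<tau> = (\<Sum>v\<in>S. q v *\<^sub>R v)"
      have "\<sigma> - \<tau> = (\<Sum>v\<in>S. u v *\<^sub>R v)"
        by (simp add: \<sigma>_def \<tau>_def pq scaleR_diff_left sum_subtractf)
      then have st: "\<sigma> = \<tau>" using u(2) by simp
      have "\<sigma> \<bullet> \<tau> = (\<Sum>a\<in>S. p a * (a \<bullet> \<tau>))"
        by (simp add: \<sigma>_def inner_sum_left)
      also have "\<dots> = (\<Sum>a\<in>S. \<Sum>b\<in>S. p a * q b * (a \<bullet> b))"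
        by (simp add: \<tau>_def inner_sum_right sum_distrib_left mult.assoc)
      also have "\<dots> \<le> 0"
      proof (intro sum_nonpos)
        fix a b assume "a \<in> S" "b \<in> S"
        show "p a * q b * (a \<bullet> b) \<le> 0"
        proof (cases "a = b")
          case True then show ?thesis using pq0[of b] by auto
        next
          case False
          then have "a \<bullet> b \<le> 0" using ang \<open>a \<in> S\<close> \<open>b \<in> S\<close> by blast
          moreover have "p a * q b \<ge> 0" using p0 by simp
          ultimately show ?thesis by (simp add: mult_nonneg_nonpos)
        qed
      qed
      finally have "\<sigma> \<bullet> \<sigma> \<le> 0" using st by simp
      then have s0: "\<sigma> = 0" by (metis inner_eq_zero_iff inner_ge_zero order_antisym)
      then have t0: "\<tau> = 0" using st by simp
      have "(\<Sum>v\<in>S. p v * (e \<bullet> v)) = e \<bullet> \<sigma>" by (simp add: \<sigma>_def inner_sum_right)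
      then have "(\<Sum>v\<in>S. p v * (e \<bullet> v)) = 0" using s0 by simp
      moreover have "\<forall>v\<in>S. p v * (e \<bullet> v) \<ge> 0" using p0 Spos by (simp add: less_imp_le)
      ultimately have "\<forall>v\<in>S. p v * (e \<bullet> v) = 0"
        using sum_nonneg_eq_0_iff[OF finS, of "\<lambda>v. p v * (e \<bullet> v)"] by blast
      then have pz: "\<forall>v\<in>S. p v = 0" using Spos by (metis less_irrefl mult_eq_0_iff)
      have "(\<Sum>v\<in>S. q v * (e \<bullet> v)) = e \<bullet> \<tau>" by (simp add: \<tau>_def inner_sum_right)
      then have "(\<Sum>v\<in>S. q v * (e \<bullet> v)) = 0" using t0 by simp
      moreover have "\<forall>v\<in>S. q v * (e \<bullet> v) \<ge> 0" using p0 Spos by (simp add: less_imp_le)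
      ultimately have "\<forall>v\<in>S. q v * (e \<bullet> v) = 0"
        using sum_nonneg_eq_0_iff[OF finS, of "\<lambda>v. q v * (e \<bullet> v)"] by blast
      then have qz: "\<forall>v\<in>S. q v = 0" using Spos by (metis less_irrefl mult_eq_0_iff)
      show False using u(1) pz qz pq by auto
    qed
    then show ?thesis using dependent_finite[OF finS] by simp
  qed
  have "simple_system \<Phi> S"
    unfolding simple_system_def
  proof (intro conjI ballI)
    show "S \<subseteq> \<Phi>" by (rule SPhi)
    show "independent S" by (rule indep)
    fix \<beta> assume b: "\<beta> \<in> \<Phi>"
    show "\<exists>c. \<beta> = (\<Sum>\<alpha>\<in>S. c \<alpha> *\<^sub>R \<alpha>) \<and> ((\<forall>\<alpha>\<in>S. 0 \<le> c \<alpha>) \<or> (\<forall>\<alpha>\<in>S. c \<alpha> \<le> 0))"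
    proof (cases "e \<bullet> \<beta> > 0")
      case True
      then have "\<beta> \<in> P" using b by (simp add: P_def)
      then show ?thesis using S(1) by (auto simp: gen_def nncomb_def)
    next
      case False
      then have "e \<bullet> \<beta> < 0" using ne b by (meson linorder_neqE_linordered_idom)
      then have "- \<beta> \<in> P" using negP b by blast
      then obtain c where c: "\<forall>\<gamma>\<in>S. c \<gamma> \<ge> 0" "- \<beta> = (\<Sum>\<gamma>\<in>S. c \<gamma> *\<^sub>R \<gamma>)"
        using S(1) by (auto simp: gen_def nncomb_def)
      have "\<beta> = (\<Sum>\<gamma>\<in>S. (- c \<gamma>) *\<^sub>R \<gamma>)"
      proof -
        have "\<beta> = - (- \<beta>)" by simp
        also have "\<dots> = - (\<Sum>\<gamma>\<in>S. c \<gamma> *\<^sub>R \<gamma>)" using c(2) by simp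
        also have "\<dots> = (\<Sum>\<gamma>\<in>S. (- c \<gamma>) *\<^sub>R \<gamma>)" by (simp add: sum_negf)
        finally show ?thesis .
      qed
      then show ?thesis using c(1) by (intro exI[of _ "\<lambda>\<gamma>. - c \<gamma>"]) auto
    qed
  qed
  then show ?thesis using SP unfolding P_def by blast
qed

lemma pos_coeffs:
  assumes "simple_system X S" "\<forall>\<gamma>\<in>S. e \<bullet> \<gamma> > 0" "\<beta> \<in> X" "e \<bullet> \<beta> > 0"
  shows "nncomb S \<beta>"
proof -
  obtain c where c: "\<beta> = (\<Sum>\<alpha>\<in>S. c \<alpha> *\<^sub>R \<alpha>)" "(\<forall>\<alpha>\<in>S. c \<alpha> \<ge> 0) \<or> (\<forall>\<alpha>\<in>S. c \<alpha> \<le> 0)"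
    using assms(1,3) unfolding simple_system_def by blast
  show ?thesis
  proof (cases "\<forall>\<alpha>\<in>S. c \<alpha> \<ge> 0")
    case True then show ?thesis using c(1) unfolding nncomb_def by blast
  next
    case False
    then have n: "\<forall>\<alpha>\<in>S. c \<alpha> \<le> 0" using c(2) by blast
    have "e \<bullet> \<beta> = (\<Sum>\<alpha>\<in>S. c \<alpha> * (e \<bullet> \<alpha>))" unfolding c(1) by (simp add: inner_sum_right)
    also have "\<dots> \<le> 0"
    proof (rule sum_nonpos)
      fix \<alpha> assume a: "\<alpha> \<in> S"
      have "c \<alpha> \<le> 0" "e \<bullet> \<alpha> \<ge> 0" using n assms(2) a by (auto intro: less_imp_le)
      then show "c \<alpha> * (e \<bullet> \<alpha>) \<le> 0" by (rule mult_nonpos_nonneg)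
    qed
    finally have "e \<bullet> \<beta> \<le> 0" .
    then show ?thesis using assms(4) by linarith
  qed
qed

lemma simple_finite: "root_system \<Phi> \<Longrightarrow> simple_system \<Phi> S \<Longrightarrow> finite S"
proof -
  assume "root_system \<Phi>" "simple_system \<Phi> S"
  then have "S \<subseteq> \<Phi>" "finite \<Phi>" unfolding root_system_def simple_system_def by auto
  then show "finite S" by (rule finite_subset)
qed

lemma simple_unique:
  assumes rs: "root_system \<Phi>" and S: "simple_system \<Phi> S" and S': "simple_system \<Phi> S'"
    and p: "\<forall>\<gamma>\<in>S. e \<bullet> \<gamma> > 0" and p': "\<forall>\<gamma>\<in>S'. e \<bullet> \<gamma> > 0"
  shows "S \<subseteq> S'"
proof
  fix x assume x: "x \<in> S"
  have xPhi: "x \<in> \<Phi>" using S x by (auto simp: simple_system_def)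
  have fS': "finite S'" using simple_finite[OF rs S'] .
  have "nncomb S' x" using pos_coeffs[OF S' p' xPhi] p x by blast
  then obtain c where c: "\<forall>\<gamma>\<in>S'. c \<gamma> \<ge> 0" "x = (\<Sum>\<gamma>\<in>S'. c \<gamma> *\<^sub>R \<gamma>)"
    unfolding nncomb_def by blast
  have "\<forall>\<gamma>\<in>S'. nncomb S \<gamma>"
    using pos_coeffs[OF S p] p' S' by (auto simp: simple_system_def)
  moreover have "independent S" using S by (simp add: simple_system_def)
  ultimately obtain \<gamma> r where g: "\<gamma> \<in> S'" "r > 0" "\<gamma> = r *\<^sub>R x"
    using PL[of S S' x c] fS' x c by blast
  have "\<gamma> \<in> \<Phi>" using S' g(1) by (auto simp: simple_system_def)
  then have "r = 1" using rs_reduced[OF rs xPhi, of r] g by simp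
  then show "x \<in> S'" using g by simp
qed

lemma simple_roots_spec:
  assumes rs: "root_system \<Phi>" and C: "C \<in> Ch \<Phi>"
  shows "simple_system \<Phi> (simple_roots \<Phi> C) \<and> simple_roots \<Phi> C \<subseteq> pos_roots \<Phi> C"
proof -
  obtain e where e: "e \<in> C" using chamber_ne[OF C] by blast
  have pr: "pos_roots \<Phi> C = {\<beta>\<in>\<Phi>. e \<bullet> \<beta> > 0}" using pos_roots_eq[OF C e] .
  have "\<exists>S. simple_system \<Phi> S \<and> S \<subseteq> {\<beta>\<in>\<Phi>. e \<bullet> \<beta> > 0}"
    using rs unfolding root_system_def
    by (intro simple_exists) (use chamber_nonzero[OF C e] in auto)
  then obtain S where S: "simple_system \<Phi> S" "S \<subseteq> pos_roots \<Phi> C" using pr by auto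
  have "(THE S. simple_system \<Phi> S \<and> S \<subseteq> pos_roots \<Phi> C) = S"
  proof (rule the_equality)
    show "simple_system \<Phi> S \<and> S \<subseteq> pos_roots \<Phi> C" using S by blast
    fix S' assume S': "simple_system \<Phi> S' \<and> S' \<subseteq> pos_roots \<Phi> C"
    have "\<forall>\<gamma>\<in>S. e \<bullet> \<gamma> > 0" "\<forall>\<gamma>\<in>S'. e \<bullet> \<gamma> > 0" using S S' pr by auto
    then show "S' = S" using simple_unique[OF rs] S S' by blast
  qed
  then show ?thesis using S by (simp add: simple_roots_def)
qed

lemma part2:
  assumes rs: "root_system \<Phi>" and sub: "root_subsystem \<Phi> \<Psi>"
    and C: "C \<in> Ch \<Phi>" and D: "D \<in> Ch \<Psi>" and lift: "lifts \<Phi> \<Psi> C D"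
  shows "saturated \<Phi> \<Psi>"
proof -
  have rsP: "root_system \<Psi>" using rs_sub[OF rs sub] .
  define J where "J = simple_roots \<Psi> D"
  define S where "S = simple_roots \<Phi> C"
  have J: "simple_system \<Psi> J" "J \<subseteq> pos_roots \<Psi> D"
    using simple_roots_spec[OF rsP D] by (auto simp: J_def)
  have S: "simple_system \<Phi> S" using simple_roots_spec[OF rs C] by (auto simp: S_def)
  have JS: "J \<subseteq> S" using lift by (simp add: lifts_def J_def S_def)
  obtain e where e: "e \<in> D" using chamber_ne[OF D] by blast
  have Jpos: "\<forall>\<gamma>\<in>J. e \<bullet> \<gamma> > 0" using J(2) pos_roots_eq[OF D e] by auto
  have JPsi: "J \<subseteq> \<Psi>" using J(1) by (simp add: simple_system_def)
  have PsiPhi: "\<Psi> \<subseteq> \<Phi>" using sub by (simp add: root_subsystem_def)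
  have finPhi: "finite \<Phi>" using rs by (simp add: root_system_def)
  have z: "0 \<notin> \<Phi>" using rs by (simp add: root_system_def)
  have clPhi: "\<forall>\<alpha>\<in>\<Phi>. \<forall>\<beta>\<in>\<Phi>. refl \<alpha> \<beta> \<in> \<Phi>" using rs by (simp add: root_system_def)
  have clPsi: "\<forall>\<alpha>\<in>\<Psi>. \<forall>\<beta>\<in>\<Psi>. refl \<alpha> \<beta> \<in> \<Psi>" using sub by (simp add: root_subsystem_def)
  have finJ: "finite J" using simple_finite[OF rsP J(1)] .
  have finS: "finite S" using simple_finite[OF rs S] .
  have indS: "independent S" using S by (simp add: simple_system_def)
  have key: "\<beta> \<in> \<Psi>" if "\<beta> \<in> \<Phi>" "nncomb J \<beta>" for \<beta>
    using that
  proof (induction "card {\<gamma>\<in>\<Phi>. e \<bullet> \<gamma> < e \<bullet> \<beta>}" arbitrary: \<beta> rule: less_induct)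
    case less
    obtain c where c: "\<forall>\<gamma>\<in>J. c \<gamma> \<ge> 0" "\<beta> = (\<Sum>\<gamma>\<in>J. c \<gamma> *\<^sub>R \<gamma>)"
      using less.prems(2) by (auto simp: nncomb_def)
    show ?case
    proof (cases "\<beta> \<in> J")
      case True then show ?thesis using JPsi by blast
    next
      case False
      have b0: "\<beta> \<noteq> 0" using less.prems(1) z by auto
      have bb: "\<beta> \<bullet> (\<Sum>\<gamma>\<in>J. c \<gamma> *\<^sub>R \<gamma>) = (\<Sum>\<gamma>\<in>J. c \<gamma> * (\<beta> \<bullet> \<gamma>))"
        by (simp add: inner_sum_right)
      have "0 < \<beta> \<bullet> \<beta>" using b0 by simp
      also have "\<beta> \<bullet> \<beta> = (\<Sum>\<gamma>\<in>J. c \<gamma> * (\<beta> \<bullet> \<gamma>))" using bb c(2)[symmetric] by simp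
      finally have sp: "0 < (\<Sum>\<gamma>\<in>J. c \<gamma> * (\<beta> \<bullet> \<gamma>))" .
      have "\<exists>\<alpha>\<in>J. c \<alpha> * (\<beta> \<bullet> \<alpha>) > 0"
      proof (rule ccontr)
        assume "\<not> (\<exists>\<alpha>\<in>J. c \<alpha> * (\<beta> \<bullet> \<alpha>) > 0)"
        then have "(\<Sum>\<gamma>\<in>J. c \<gamma> * (\<beta> \<bullet> \<gamma>)) \<le> 0" by (intro sum_nonpos) (simp add: not_less)
        then show False using sp by simp
      qed
      then obtain \<alpha> where aJ: "\<alpha> \<in> J" and cb: "c \<alpha> * (\<beta> \<bullet> \<alpha>) > 0" by blast
      have ca: "c \<alpha> > 0" and ba: "\<beta> \<bullet> \<alpha> > 0"
        using cb c(1) aJ by (auto simp: zero_less_mult_iff)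
      have aPsi: "\<alpha> \<in> \<Psi>" using aJ JPsi by blast
      have aPhi: "\<alpha> \<in> \<Phi>" using aPsi PsiPhi by blast
      have a0: "\<alpha> \<noteq> 0" using aPhi z by auto
      define k where "k = 2 * (\<beta> \<bullet> \<alpha>) / (\<alpha> \<bullet> \<alpha>)"
      have kpos: "k > 0" using ba a0 by (simp add: k_def)
      define \<beta>' where "\<beta>' = refl \<alpha> \<beta>"
      have b': "\<beta>' = \<beta> - k *\<^sub>R \<alpha>" by (simp add: \<beta>'_def refl_def k_def)
      have b'Phi: "\<beta>' \<in> \<Phi>" using clPhi aPhi less.prems(1) by (auto simp: \<beta>'_def)
      define c' where "c' \<gamma> = c \<gamma> - (if \<gamma> = \<alpha> then k else 0)" for \<gamma>
      have "(\<Sum>\<gamma>\<in>J. c' \<gamma> *\<^sub>R \<gamma>) = (\<Sum>\<gamma>\<in>J. c \<gamma> *\<^sub>R \<gamma>) - (\<Sum>\<gamma>\<in>J. (if \<gamma> = \<alpha> then k else 0) *\<^sub>R \<gamma>)"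
        by (simp add: c'_def scaleR_diff_left sum_subtractf)
      also have "(\<Sum>\<gamma>\<in>J. (if \<gamma> = \<alpha> then k else 0) *\<^sub>R \<gamma>) = k *\<^sub>R \<alpha>"
        using finJ aJ by (simp add: if_distrib[of "\<lambda>c. c *\<^sub>R _"] sum.delta cong: if_cong)
      finally have b'c: "\<beta>' = (\<Sum>\<gamma>\<in>J. c' \<gamma> *\<^sub>R \<gamma>)" using b' c(2) by simp
      obtain b where b: "\<beta>' = (\<Sum>\<gamma>\<in>S. b \<gamma> *\<^sub>R \<gamma>)" "(\<forall>\<gamma>\<in>S. b \<gamma> \<ge> 0) \<or> (\<forall>\<gamma>\<in>S. b \<gamma> \<le> 0)"
        using S b'Phi unfolding simple_system_def by blast
      have eq: "(\<Sum>\<gamma>\<in>S. (if \<gamma> \<in> J then c' \<gamma> else 0) *\<^sub>R \<gamma>) = (\<Sum>\<gamma>\<in>S. b \<gamma> *\<^sub>R \<gamma>)"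
        using sum_ext[OF JS finS] b'c b(1) by simp
      have uq: "\<forall>\<gamma>\<in>J. c' \<gamma> = b \<gamma>"
      proof (intro ballI)
        fix \<gamma> assume g: "\<gamma> \<in> J"
        then have "\<gamma> \<in> S" using JS by blast
        have "(if \<gamma> \<in> J then c' \<gamma> else 0) = b \<gamma>"
          by (rule indep_unique[OF indS eq \<open>\<gamma> \<in> S\<close>])
        then show "c' \<gamma> = b \<gamma>" using g by simp
      qed
      show ?thesis
      proof (cases "\<forall>\<gamma>\<in>S. b \<gamma> \<ge> 0")
        case True
        then have "\<forall>\<gamma>\<in>J. c' \<gamma> \<ge> 0" using uq JS by auto
        then have nn: "nncomb J \<beta>'" using b'c unfolding nncomb_def by (intro exI[of _ c']) simp
        have ea: "e \<bullet> \<alpha> > 0" using Jpos aJ by blast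
        have lt: "e \<bullet> \<beta>' < e \<bullet> \<beta>" using b' kpos ea by (simp add: inner_diff_right)
        have "{\<gamma>\<in>\<Phi>. e \<bullet> \<gamma> < e \<bullet> \<beta>'} \<subset> {\<gamma>\<in>\<Phi>. e \<bullet> \<gamma> < e \<bullet> \<beta>}"
          using lt b'Phi by auto
        then have "card {\<gamma>\<in>\<Phi>. e \<bullet> \<gamma> < e \<bullet> \<beta>'} < card {\<gamma>\<in>\<Phi>. e \<bullet> \<gamma> < e \<bullet> \<beta>}"
          using finPhi by (intro psubset_card_mono) auto
        then have "\<beta>' \<in> \<Psi>" using less.hyps b'Phi nn by blast
        then have "refl \<alpha> \<beta>' \<in> \<Psi>" using clPsi aPsi by blast
        then show ?thesis using refl_refl[OF a0] by (simp add: \<beta>'_def)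
      next
        case False
        then have bn: "\<forall>\<gamma>\<in>S. b \<gamma> \<le> 0" using b(2) by blast
        have cz: "c \<gamma> = 0" if "\<gamma> \<in> J" "\<gamma> \<noteq> \<alpha>" for \<gamma>
        proof -
          have "c' \<gamma> = b \<gamma>" using uq that(1) by blast
          then have "c \<gamma> = b \<gamma>" using that(2) by (simp add: c'_def)
          then show ?thesis using bn JS that c(1) by (metis antisym subsetD)
        qed
        have "\<beta> = (\<Sum>\<gamma>\<in>J. (if \<gamma> = \<alpha> then c \<alpha> else 0) *\<^sub>R \<gamma>)"
          unfolding c(2) by (rule sum.cong) (auto simp: cz)
        also have "\<dots> = c \<alpha> *\<^sub>R \<alpha>"
          using finJ aJ by (simp add: if_distrib[of "\<lambda>c. c *\<^sub>R _"] sum.delta cong: if_cong)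
        finally have "\<beta> = c \<alpha> *\<^sub>R \<alpha>" .
        then have "c \<alpha> = 1" using rs_reduced[OF rs aPhi, of "c \<alpha>"] ca less.prems(1) by simp
        then have "\<beta> = \<alpha>" using \<open>\<beta> = c \<alpha> *\<^sub>R \<alpha>\<close> by simp
        then show ?thesis using aJ False \<open>\<beta> \<notin> J\<close> by blast
      qed
    qed
  qed
  have PsiJ: "\<Psi> \<subseteq> span J"
  proof
    fix \<psi> assume "\<psi> \<in> \<Psi>"
    then obtain c where "\<psi> = (\<Sum>\<gamma>\<in>J. c \<gamma> *\<^sub>R \<gamma>)" using J(1) unfolding simple_system_def by blast
    then show "\<psi> \<in> span J" by (simp add: span_sum span_scale span_base)
  qed
  then have spJ: "span \<Psi> \<subseteq> span J" by (simp add: span_minimal)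
  show ?thesis unfolding saturated_def
  proof
    show "\<Psi> \<subseteq> span \<Psi> \<inter> \<Phi>" using PsiPhi span_superset by blast
    show "span \<Psi> \<inter> \<Phi> \<subseteq> \<Psi>"
    proof
      fix \<beta> assume "\<beta> \<in> span \<Psi> \<inter> \<Phi>"
      then have bs: "\<beta> \<in> span J" and bP: "\<beta> \<in> \<Phi>" using spJ by auto
      obtain d where d: "\<beta> = (\<Sum>\<gamma>\<in>J. d \<gamma> *\<^sub>R \<gamma>)" using bs span_finite[OF finJ] by auto
      obtain b where b: "\<beta> = (\<Sum>\<gamma>\<in>S. b \<gamma> *\<^sub>R \<gamma>)" "(\<forall>\<gamma>\<in>S. b \<gamma> \<ge> 0) \<or> (\<forall>\<gamma>\<in>S. b \<gamma> \<le> 0)"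
        using S bP unfolding simple_system_def by blast
      have eq: "(\<Sum>\<gamma>\<in>S. (if \<gamma> \<in> J then d \<gamma> else 0) *\<^sub>R \<gamma>) = (\<Sum>\<gamma>\<in>S. b \<gamma> *\<^sub>R \<gamma>)"
        using sum_ext[OF JS finS] d b(1) by simp
      have uq: "\<forall>\<gamma>\<in>J. d \<gamma> = b \<gamma>"
      proof (intro ballI)
        fix \<gamma> assume g: "\<gamma> \<in> J"
        then have "\<gamma> \<in> S" using JS by blast
        have "(if \<gamma> \<in> J then d \<gamma> else 0) = b \<gamma>"
          by (rule indep_unique[OF indS eq \<open>\<gamma> \<in> S\<close>])
        then show "d \<gamma> = b \<gamma>" using g by simp
      qed
      show "\<beta> \<in> \<Psi>"
      proof (cases "\<forall>\<gamma>\<in>S. b \<gamma> \<ge> 0")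
        case True
        then have "\<forall>\<gamma>\<in>J. d \<gamma> \<ge> 0" using uq JS by auto
        then have "nncomb J \<beta>" using d unfolding nncomb_def by (intro exI[of _ d]) simp
        then show ?thesis using key bP by blast
      next
        case False
        then have bn: "\<forall>\<gamma>\<in>S. b \<gamma> \<le> 0" using b(2) by blast
        have "\<forall>\<gamma>\<in>J. - d \<gamma> \<ge> 0"
        proof
          fix \<gamma> assume g: "\<gamma> \<in> J"
          have "b \<gamma> \<le> 0" using bn JS g by blast
          moreover have "d \<gamma> = b \<gamma>" using uq g by blast
          ultimately show "- d \<gamma> \<ge> 0" by simp
        qed
        moreover have "- \<beta> = (\<Sum>\<gamma>\<in>J. (- d \<gamma>) *\<^sub>R \<gamma>)"
        proof -
          have "- \<beta> = - (\<Sum>\<gamma>\<in>J. d \<gamma> *\<^sub>R \<gamma>)" using d by (rule arg_cong)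
          also have "\<dots> = (\<Sum>\<gamma>\<in>J. (- d \<gamma>) *\<^sub>R \<gamma>)" by (simp add: sum_negf)
          finally show ?thesis .
        qed
        ultimately have "nncomb J (- \<beta>)" unfolding nncomb_def by (intro exI[of _ "\<lambda>\<gamma>. - d \<gamma>"]) simp
        then have m: "- \<beta> \<in> \<Psi>" using key rs_neg[OF rs bP] by blast
        have "- \<beta> \<noteq> 0" using bP z by auto
        then have "refl (- \<beta>) (- \<beta>) = \<beta>" using refl_self[of "- \<beta>"] by simp
        moreover have "refl (- \<beta>) (- \<beta>) \<in> \<Psi>" using clPsi m by blast
        ultimately show ?thesis by simp
      qed
    qed
  qed
qed

lemma abs_sign: "\<bar>a - b\<bar> < \<bar>b\<bar> \<Longrightarrow> (a > 0 \<longleftrightarrow> b > 0) \<and> a \<noteq> (0::real)"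
  by (cases "b > 0") (auto simp: abs_if split: if_splits)

lemma part1:
  assumes rs: "root_system \<Phi>" and sub: "root_subsystem \<Phi> \<Psi>"
    and sat: "saturated \<Phi> \<Psi>" and D: "D \<in> Ch \<Psi>"
  shows "\<exists>C\<in>Ch \<Phi>. lifts \<Phi> \<Psi> C D"
proof -
  have rsP: "root_system \<Psi>" using rs_sub[OF rs sub] .
  define J where "J = simple_roots \<Psi> D"
  have J: "simple_system \<Psi> J" "J \<subseteq> pos_roots \<Psi> D"
    using simple_roots_spec[OF rsP D] by (auto simp: J_def)
  obtain e where e: "e \<in> D" using chamber_ne[OF D] by blast
  have Jpos: "\<forall>\<gamma>\<in>J. e \<bullet> \<gamma> > 0" using J(2) pos_roots_eq[OF D e] by auto
  have JPsi: "J \<subseteq> \<Psi>" using J(1) by (simp add: simple_system_def)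
  have PsiPhi: "\<Psi> \<subseteq> \<Phi>" using sub by (simp add: root_subsystem_def)
  have finPhi: "finite \<Phi>" using rs by (simp add: root_system_def)
  have finJ: "finite J" using simple_finite[OF rsP J(1)] .
  have indJ: "independent J" using J(1) by (simp add: simple_system_def)
  define V where "V = span \<Psi>"
  have satEq: "\<Psi> = V \<inter> \<Phi>" using sat by (simp add: saturated_def V_def)
  have ePsi: "\<forall>\<beta>\<in>\<Psi>. e \<bullet> \<beta> \<noteq> 0" using chamber_nonzero[OF D e] by blast
  have decomp: "\<exists>q. q \<noteq> 0 \<and> (\<forall>w\<in>V. q \<bullet> w = 0) \<and> \<beta> - q \<in> V" if "\<beta> \<in> \<Phi> - V" for \<beta>
  proof -
    obtain p q where pq: "p \<in> span \<Psi>" "\<And>w. w \<in> span \<Psi> \<Longrightarrow> orthogonal q w" "\<beta> = p + q"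
      using orthogonal_subspace_decomp_exists[of \<Psi> \<beta>] by blast
    have "q \<noteq> 0" using pq(1,3) that by (auto simp: V_def)
    moreover have "\<forall>w\<in>V. q \<bullet> w = 0" using pq(2) by (simp add: V_def orthogonal_def)
    moreover have "\<beta> - q \<in> V" using pq(1,3) by (simp add: V_def)
    ultimately show ?thesis by blast
  qed
  then obtain Q where Q: "\<forall>\<beta>\<in>\<Phi> - V. Q \<beta> \<noteq> 0 \<and> (\<forall>w\<in>V. Q \<beta> \<bullet> w = 0) \<and> \<beta> - Q \<beta> \<in> V"
    by metis
  define N where "N = (\<Union>\<beta>\<in>\<Phi> - V. {z. Q \<beta> \<bullet> z = 0})"
  have "negligible N" unfolding N_def
  proof (rule negligible_Union)
    show "finite ((\<lambda>\<beta>. {z. Q \<beta> \<bullet> z = 0}) ` (\<Phi> - V))" using finPhi by simp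
    fix T assume "T \<in> (\<lambda>\<beta>. {z. Q \<beta> \<bullet> z = 0}) ` (\<Phi> - V)"
    then obtain \<beta> where "\<beta> \<in> \<Phi> - V" "T = {z. Q \<beta> \<bullet> z = 0}" by blast
    then show "negligible T" using Q negligible_hyperplane[of "Q \<beta>" 0] by auto
  qed
  then have "N \<noteq> UNIV" using non_negligible_UNIV by metis
  then obtain z where zN: "z \<notin> N" by blast
  obtain z1 y where zy: "z1 \<in> span \<Psi>" "\<And>w. w \<in> span \<Psi> \<Longrightarrow> orthogonal y w" "z = z1 + y"
    using orthogonal_subspace_decomp_exists[of \<Psi> z] by blast
  have y1: "\<forall>v\<in>V. y \<bullet> v = 0" using zy(2) by (simp add: V_def orthogonal_def)
  have y2: "y \<bullet> \<beta> \<noteq> 0" if b: "\<beta> \<in> \<Phi> - V" for \<beta>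
  proof -
    have qb: "Q \<beta> \<noteq> 0" "\<forall>w\<in>V. Q \<beta> \<bullet> w = 0" "\<beta> - Q \<beta> \<in> V" using Q b by auto
    have "y \<bullet> \<beta> = y \<bullet> (\<beta> - Q \<beta>) + y \<bullet> Q \<beta>" by (simp add: inner_diff_right)
    also have "y \<bullet> (\<beta> - Q \<beta>) = 0" using y1 qb(3) by blast
    also have "y \<bullet> Q \<beta> = (z - z1) \<bullet> Q \<beta>" using zy(3) by simp
    also have "\<dots> = z \<bullet> Q \<beta> - Q \<beta> \<bullet> z1" by (simp add: inner_diff_left inner_commute[of z1])
    also have "Q \<beta> \<bullet> z1 = 0" using qb(2) zy(1) by (simp add: V_def)
    finally have "y \<bullet> \<beta> = Q \<beta> \<bullet> z" by (simp add: inner_commute)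
    moreover have "Q \<beta> \<bullet> z \<noteq> 0" using zN b by (auto simp: N_def)
    ultimately show ?thesis by simp
  qed
  define t where "t = 1 + (\<Sum>\<beta>\<in>\<Phi> - V. \<bar>e \<bullet> \<beta>\<bar> / \<bar>y \<bullet> \<beta>\<bar>)"
  have tpos: "t > 0"
  proof -
    have "(\<Sum>\<beta>\<in>\<Phi> - V. \<bar>e \<bullet> \<beta>\<bar> / \<bar>y \<bullet> \<beta>\<bar>) \<ge> 0" by (intro sum_nonneg) simp
    then show ?thesis by (simp add: t_def)
  qed
  have tbig: "t * \<bar>y \<bullet> \<beta>\<bar> > \<bar>e \<bullet> \<beta>\<bar>" if b: "\<beta> \<in> \<Phi> - V" for \<beta>
  proof -
    have yb: "\<bar>y \<bullet> \<beta>\<bar> > 0" using y2[OF b] by simp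
    have "\<bar>e \<bullet> \<beta>\<bar> / \<bar>y \<bullet> \<beta>\<bar> \<le> (\<Sum>\<beta>\<in>\<Phi> - V. \<bar>e \<bullet> \<beta>\<bar> / \<bar>y \<bullet> \<beta>\<bar>)"
      using finPhi b by (intro member_le_sum) auto
    then have "t \<ge> 1 + \<bar>e \<bullet> \<beta>\<bar> / \<bar>y \<bullet> \<beta>\<bar>" by (simp add: t_def)
    then have "t * \<bar>y \<bullet> \<beta>\<bar> \<ge> (1 + \<bar>e \<bullet> \<beta>\<bar> / \<bar>y \<bullet> \<beta>\<bar>) * \<bar>y \<bullet> \<beta>\<bar>"
      using yb by (intro mult_right_mono) auto
    also have "(1 + \<bar>e \<bullet> \<beta>\<bar> / \<bar>y \<bullet> \<beta>\<bar>) * \<bar>y \<bullet> \<beta>\<bar> = \<bar>y \<bullet> \<beta>\<bar> + \<bar>e \<bullet> \<beta>\<bar>"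
      using yb by (simp add: field_simps)
    finally show ?thesis using yb by simp
  qed
  define x where "x = t *\<^sub>R y + e"
  have xin: "x \<bullet> \<beta> = t * (y \<bullet> \<beta>) + e \<bullet> \<beta>" for \<beta> by (simp add: x_def inner_add_left)
  have xV: "x \<bullet> \<beta> = e \<bullet> \<beta>" if "\<beta> \<in> V" for \<beta> using xin y1 that by simp
  have xn: "(x \<bullet> \<beta> > 0 \<longleftrightarrow> y \<bullet> \<beta> > 0) \<and> x \<bullet> \<beta> \<noteq> 0" if b: "\<beta> \<in> \<Phi> - V" for \<beta>
  proof -
    have "\<bar>x \<bullet> \<beta> - t * (y \<bullet> \<beta>)\<bar> < \<bar>t * (y \<bullet> \<beta>)\<bar>"
      using tbig[OF b] tpos by (simp add: xin abs_mult)
    then have "(x \<bullet> \<beta> > 0 \<longleftrightarrow> t * (y \<bullet> \<beta>) > 0) \<and> x \<bullet> \<beta> \<noteq> 0" by (rule abs_sign)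
    then show ?thesis using tpos by (simp add: zero_less_mult_iff)
  qed
  define U where "U = UNIV - (\<Union>\<alpha>\<in>\<Phi>. {x. x \<bullet> \<alpha> = 0})"
  have xU: "x \<in> U"
  proof -
    have "x \<bullet> \<alpha> \<noteq> 0" if a: "\<alpha> \<in> \<Phi>" for \<alpha>
    proof (cases "\<alpha> \<in> V")
      case True
      then have "\<alpha> \<in> \<Psi>" using satEq a by blast
      then show ?thesis using xV[OF True] ePsi by simp
    next
      case False then show ?thesis using xn a by blast
    qed
    then show ?thesis by (auto simp: U_def)
  qed
  define C where "C = connected_component_set U x"
  have C: "C \<in> Ch \<Phi>" unfolding Ch_def C_def U_def[symmetric] components_def using xU by blast
  have xC: "x \<in> C" unfolding C_def using xU by (simp add: mem_Collect_eq)
  define S where "S = simple_roots \<Phi> C"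
  have S: "simple_system \<Phi> S" "S \<subseteq> pos_roots \<Phi> C" using simple_roots_spec[OF rs C] by (auto simp: S_def)
  have Spos: "\<forall>\<gamma>\<in>S. x \<bullet> \<gamma> > 0" using S(2) pos_roots_eq[OF C xC] by auto
  have finS: "finite S" using simple_finite[OF rs S(1)] .
  have "J \<subseteq> S"
  proof
    fix \<alpha> assume aJ: "\<alpha> \<in> J"
    have aPsi: "\<alpha> \<in> \<Psi>" using aJ JPsi by blast
    have aPhi: "\<alpha> \<in> \<Phi>" using aPsi PsiPhi by blast
    have aV: "\<alpha> \<in> V" using aPsi by (simp add: V_def span_base)
    have xa: "x \<bullet> \<alpha> > 0" using xV[OF aV] Jpos aJ by simp
    obtain c where c: "\<forall>\<gamma>\<in>S. c \<gamma> \<ge> 0" "\<alpha> = (\<Sum>\<gamma>\<in>S. c \<gamma> *\<^sub>R \<gamma>)"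
      using pos_coeffs[OF S(1) Spos aPhi xa] unfolding nncomb_def by blast
    have ynn: "y \<bullet> \<gamma> \<ge> 0" if g: "\<gamma> \<in> S" for \<gamma>
    proof (cases "\<gamma> \<in> V")
      case True then show ?thesis using y1 by simp
    next
      case False
      have "\<gamma> \<in> \<Phi>" using S(1) g by (auto simp: simple_system_def)
      then show ?thesis using xn[of \<gamma>] False Spos g by auto
    qed
    have "0 = y \<bullet> \<alpha>" using y1 aV by simp
    also have "\<dots> = (\<Sum>\<gamma>\<in>S. c \<gamma> * (y \<bullet> \<gamma>))" by (subst c(2)) (simp add: inner_sum_right)
    finally have s0: "(\<Sum>\<gamma>\<in>S. c \<gamma> * (y \<bullet> \<gamma>)) = 0" by simp
    have "\<forall>\<gamma>\<in>S. c \<gamma> * (y \<bullet> \<gamma>) \<ge> 0" using c(1) ynn by simp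
    then have "\<forall>\<gamma>\<in>S. c \<gamma> * (y \<bullet> \<gamma>) = 0"
      using sum_nonneg_eq_0_iff[OF finS, of "\<lambda>\<gamma>. c \<gamma> * (y \<bullet> \<gamma>)"] s0 by blast
    then have cz: "c \<gamma> = 0" if "\<gamma> \<in> S - V" for \<gamma>
    proof -
      have "\<gamma> \<in> \<Phi>" using S(1) that by (auto simp: simple_system_def)
      then have "y \<bullet> \<gamma> \<noteq> 0" using y2 that by blast
      then show ?thesis using \<open>\<forall>\<gamma>\<in>S. c \<gamma> * (y \<bullet> \<gamma>) = 0\<close> that by auto
    qed
    define T where "T = S \<inter> V"
    have "\<alpha> = (\<Sum>\<gamma>\<in>T. c \<gamma> *\<^sub>R \<gamma>)"
      unfolding c(2) T_def using finS cz by (intro sum.mono_neutral_right) auto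
    moreover have "\<forall>\<gamma>\<in>T. nncomb J \<gamma>"
    proof
      fix \<gamma> assume g: "\<gamma> \<in> T"
      have gPhi: "\<gamma> \<in> \<Phi>" using S(1) g by (auto simp: simple_system_def T_def)
      have gPsi: "\<gamma> \<in> \<Psi>" using satEq g gPhi by (auto simp: T_def)
      have "e \<bullet> \<gamma> > 0" using xV[of \<gamma>] Spos g by (auto simp: T_def)
      then show "nncomb J \<gamma>" using pos_coeffs[OF J(1) Jpos gPsi] by blast
    qed
    moreover have "finite T" using finS by (simp add: T_def)
    ultimately obtain \<gamma> r where g: "\<gamma> \<in> T" "r > 0" "\<gamma> = r *\<^sub>R \<alpha>"
      using PL[OF indJ _ aJ, of T c] c(1) by (auto simp: T_def)
    have "\<gamma> \<in> \<Phi>" using S(1) g(1) by (auto simp: simple_system_def T_def)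
    then have "r = 1" using rs_reduced[OF rs aPhi, of r] g by simp
    then show "\<alpha> \<in> S" using g by (simp add: T_def)
  qed
  then show ?thesis using C by (auto simp: lifts_def J_def S_def)
qed

theorem theorem1:
  fixes \<Phi> \<Psi> :: "'a::euclidean_space set"
  assumes "root_system \<Phi>" and "root_subsystem \<Phi> \<Psi>"
  shows "(saturated \<Phi> \<Psi> \<longrightarrow> (\<forall>D\<in>Ch \<Psi>. \<exists>C\<in>Ch \<Phi>. lifts \<Phi> \<Psi> C D))
       \<and> ((\<exists>C\<in>Ch \<Phi>. \<exists>D\<in>Ch \<Psi>. lifts \<Phi> \<Psi> C D) \<longrightarrow> saturated \<Phi> \<Psi>)"
  using part1[OF assms] part2[OF assms] by blast

end
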